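(* Let $G$ be a finite group and let $x_1, \dots, x_n \in G$ be representatives of the distinct rational classes of $G$. Let $\chi \subseteq \{x_1, \dots, x_n\}$ be a largest subset such that for any two distinct $x_i, x_j \in \chi$ we have $\mathrm{Sol}_G(x_i) \neq \mathrm{Sol}_G(x_j)^g$ for all $g \in G$. Then $$|\mathrm{Solv}(G)| = \sum_{x \in \chi} [G : N_G(\mathrm{Sol}_G(x))].$$
   Context: For a finite group $G$ and $x \in G$, the solvabilizer of $x$ in $G$ is $\mathrm{Sol}_G(x) = \{y \in G : \langle x, y \rangle \text{ is solvable}\}$; $\mathrm{Solv}(G) = \{\mathrm{Sol}_G(x) : x \in G\}$ is the set of distinct solvabilizers. The rational class of $x \in G$ is the union of the conjugacy classes $(x^i)^G$ over all integers $i$ with $\gcd(|x|, i) = 1$. For a subset $X \subseteq G$ and $g \in G$, $X^g = \{g^{-1}xg : x \in X\}$, and $N_G(X) = \{g \in G : X^g = X\}$ is the normalizer of the subset $X$. *)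

theory Defs
  imports "HOL-Algebra.Algebra"
begin

definition solvabilizer :: "('a, 'b) monoid_scheme \<Rightarrow> 'a \<Rightarrow> 'a set" where
  "solvabilizer G x =
     {y \<in> carrier G. solvable (G\<lparr>carrier := generate G {x, y}\<rparr>)}"

definition Solv :: "('a, 'b) monoid_scheme \<Rightarrow> 'a set set" where
  "Solv G = solvabilizer G ` carrier G"

definition set_conj :: "('a, 'b) monoid_scheme \<Rightarrow> 'a set \<Rightarrow> 'a \<Rightarrow> 'a set" where
  "set_conj G S g = {inv\<^bsub>G\<^esub> g \<otimes>\<^bsub>G\<^esub> s \<otimes>\<^bsub>G\<^esub> g | s. s \<in> S}"

definition set_normalizer :: "('a, 'b) monoid_scheme \<Rightarrow> 'a set \<Rightarrow> 'a set" where
  "set_normalizer G S = {g \<in> carrier G. set_conj G S g = S}"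

definition conj_class :: "('a, 'b) monoid_scheme \<Rightarrow> 'a \<Rightarrow> 'a set" where
  "conj_class G x = {inv\<^bsub>G\<^esub> g \<otimes>\<^bsub>G\<^esub> x \<otimes>\<^bsub>G\<^esub> g | g. g \<in> carrier G}"

definition rational_class :: "('a, 'b) monoid_scheme \<Rightarrow> 'a \<Rightarrow> 'a set" where
  "rational_class G x =
     (\<Union>i \<in> {i::int. coprime (int (group.ord G x)) i}. conj_class G (x [^]\<^bsub>G\<^esub> i))"

definition index :: "('a, 'b) monoid_scheme \<Rightarrow> 'a set \<Rightarrow> nat" where
  "index G H = card (rcosets\<^bsub>G\<^esub> H)"

definition rational_class_reps :: "('a, 'b) monoid_scheme \<Rightarrow> 'a set \<Rightarrow> bool" where
  "rational_class_reps G R \<longleftrightarrow> R \<subseteq> carrier G \<and>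
     (\<forall>y \<in> carrier G. \<exists>!r. r \<in> R \<and> y \<in> rational_class G r)"

definition sol_nonconj :: "('a, 'b) monoid_scheme \<Rightarrow> 'a set \<Rightarrow> bool" where
  "sol_nonconj G T \<longleftrightarrow> (\<forall>a \<in> T. \<forall>b \<in> T. a \<noteq> b \<longrightarrow>
     (\<forall>g \<in> carrier G. solvabilizer G a \<noteq> set_conj G (solvabilizer G b) g))"

end

theory Submission
  imports Defs
begin

lemma card_image_eqrel:
  assumes "\<And>a b. a \<in> A \<Longrightarrow> b \<in> A \<Longrightarrow> (f a = f b \<longleftrightarrow> q a = q b)"
  shows "card (f ` A) = card (q ` A)"
proof -
  define p where "p = (\<lambda>Z. q (inv_into A f Z))"
  have "bij_betw p (f ` A) (q ` A)"
  proof (rule bij_betw_imageI)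
    show "inj_on p (f ` A)"
    proof (rule inj_onI)
      fix Z1 Z2 assume Z1: "Z1 \<in> f ` A" and Z2: "Z2 \<in> f ` A"
        and e: "p Z1 = p Z2"
      have "inv_into A f Z1 \<in> A" "inv_into A f Z2 \<in> A"
        using Z1 Z2 by (auto intro: inv_into_into)
      then have "f (inv_into A f Z1) = f (inv_into A f Z2)" using assms e unfolding p_def by blast
      then show "Z1 = Z2" using Z1 Z2 by (simp add: f_inv_into_f)
    qed
    have *: "p (f a) = q a" if a: "a \<in> A" for a
    proof -
      have i: "inv_into A f (f a) \<in> A" using a by (auto intro: inv_into_into)
      have "f (inv_into A f (f a)) = f a" using a by (simp add: f_inv_into_f)
      then show ?thesis using assms[OF i a] unfolding p_def by blast
    qed
    show "p ` f ` A = q ` A"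
      using * by (auto simp: image_image intro!: image_cong)
  qed
  then show ?thesis by (rule bij_betw_same_card)
qed

context group
begin

lemma set_conj_one: "S \<subseteq> carrier G \<Longrightarrow> set_conj G S \<one> = S"
  unfolding set_conj_def by (auto, (metis l_inv_ex l_one one_closed r_one subsetD inv_one)+)

lemma set_conj_subset: "S \<subseteq> carrier G \<Longrightarrow> g \<in> carrier G \<Longrightarrow> set_conj G S g \<subseteq> carrier G"
  unfolding set_conj_def by auto

lemma set_conj_mult:
  assumes "S \<subseteq> carrier G" "g \<in> carrier G" "h \<in> carrier G"
  shows "set_conj G (set_conj G S g) h = set_conj G S (g \<otimes> h)"
proof -
  have that: "inv h \<otimes> (inv g \<otimes> s \<otimes> g) \<otimes> h = inv (g \<otimes> h) \<otimes> s \<otimes> (g \<otimes> h)" if "s \<in> S" for s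
    using that assms by (auto simp: inv_mult_group m_assoc)
  show ?thesis unfolding set_conj_def
  proof (intro equalityI subsetI)
    fix z assume "z \<in> {inv h \<otimes> s \<otimes> h |s. s \<in> {inv g \<otimes> s \<otimes> g |s. s \<in> S}}"
    then obtain s where "s \<in> S" "z = inv h \<otimes> (inv g \<otimes> s \<otimes> g) \<otimes> h" by blast
    then show "z \<in> {inv (g \<otimes> h) \<otimes> s \<otimes> (g \<otimes> h) |s. s \<in> S}" using that by auto
  next
    fix z assume "z \<in> {inv (g \<otimes> h) \<otimes> s \<otimes> (g \<otimes> h) |s. s \<in> S}"
    then obtain s where s: "s \<in> S" "z = inv (g \<otimes> h) \<otimes> s \<otimes> (g \<otimes> h)" by blast
    have m: "inv g \<otimes> s \<otimes> g \<in> {inv g \<otimes> s \<otimes> g |s. s \<in> S}" using s by blast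
    have "z = inv h \<otimes> (inv g \<otimes> s \<otimes> g) \<otimes> h" using that[of s] s by simp
    then show "z \<in> {inv h \<otimes> s \<otimes> h |s. s \<in> {inv g \<otimes> s \<otimes> g |s. s \<in> S}}"
      using m by blast
  qed
qed

lemma set_conj_inv:
  assumes "S \<subseteq> carrier G" "g \<in> carrier G"
  shows "set_conj G (set_conj G S g) (inv g) = S"
  using assms by (simp add: set_conj_mult set_conj_one)

lemma sol_subset: "solvabilizer G x \<subseteq> carrier G"
  unfolding solvabilizer_def by auto

lemma conj_hom: "g \<in> carrier G \<Longrightarrow> group_hom G G (\<lambda>h. inv g \<otimes> h \<otimes> g)"
  apply (rule group_hom.intro, rule is_group, rule is_group)
  apply (rule group_hom_axioms.intro)
  apply (rule homI)
   apply simp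
  by (metis inv_closed m_assoc m_closed r_inv r_one l_inv)

lemma solvable_conj:
  assumes g: "g \<in> carrier G" and K: "subgroup K G" and sol: "solvable (G\<lparr>carrier := K\<rparr>)"
  shows "solvable (G\<lparr>carrier := (\<lambda>h. inv g \<otimes> h \<otimes> g) ` K\<rparr>)"
proof -
  let ?c = "\<lambda>h. inv g \<otimes> h \<otimes> g"
  interpret C: group_hom G G ?c using conj_hom[OF g] .
  have K': "subgroup (?c ` K) G" using C.subgroup_img_is_subgroup[OF K] .
  have "group_hom (G\<lparr>carrier := K\<rparr>) (G\<lparr>carrier := ?c ` K\<rparr>) ?c"
  proof (rule group_hom.intro)
    show "group (G\<lparr>carrier := K\<rparr>)" using subgroup_imp_group[OF K] .
    show "group (G\<lparr>carrier := ?c ` K\<rparr>)" using subgroup_imp_group[OF K'] .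
    show "group_hom_axioms (G\<lparr>carrier := K\<rparr>) (G\<lparr>carrier := ?c ` K\<rparr>) ?c"
    proof (rule group_hom_axioms.intro, rule homI)
      show "\<And>x. x \<in> carrier (G\<lparr>carrier := K\<rparr>) \<Longrightarrow> ?c x \<in> carrier (G\<lparr>carrier := ?c ` K\<rparr>)"
        by simp
      show "\<And>x y. x \<in> carrier (G\<lparr>carrier := K\<rparr>) \<Longrightarrow> y \<in> carrier (G\<lparr>carrier := K\<rparr>) \<Longrightarrow>
          ?c (x \<otimes>\<^bsub>G\<lparr>carrier := K\<rparr>\<^esub> y) = ?c x \<otimes>\<^bsub>G\<lparr>carrier := ?c ` K\<rparr>\<^esub> ?c y"
      proof -
        fix x y assume "x \<in> carrier (G\<lparr>carrier := K\<rparr>)" "y \<in> carrier (G\<lparr>carrier := K\<rparr>)"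
        then have "x \<in> carrier G" "y \<in> carrier G" using subgroup.subset[OF K] by auto
        then show "?c (x \<otimes>\<^bsub>G\<lparr>carrier := K\<rparr>\<^esub> y) = ?c x \<otimes>\<^bsub>G\<lparr>carrier := ?c ` K\<rparr>\<^esub> ?c y"
          using C.hom_mult by simp
      qed
    qed
  qed
  then show ?thesis
    using group_hom.surj_hom_imp_solvable[of "G\<lparr>carrier := K\<rparr>" "G\<lparr>carrier := ?c ` K\<rparr>" ?c] sol
    by simp
qed

lemma sol_conj_sub:
  assumes x: "x \<in> carrier G" and g: "g \<in> carrier G"
  shows "set_conj G (solvabilizer G x) g \<subseteq> solvabilizer G (inv g \<otimes> x \<otimes> g)"
proof
  let ?c = "\<lambda>h. inv g \<otimes> h \<otimes> g"
  interpret C: group_hom G G ?c using conj_hom[OF g] .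
  fix z assume "z \<in> set_conj G (solvabilizer G x) g"
  then obtain s where s: "s \<in> solvabilizer G x" "z = ?c s" unfolding set_conj_def by blast
  have sc: "s \<in> carrier G" and sol: "solvable (G\<lparr>carrier := generate G {x, s}\<rparr>)"
    using s unfolding solvabilizer_def by auto
  have "generate G {?c x, ?c s} = ?c ` generate G {x, s}"
    using C.generate_img[of "{x, s}"] x sc by simp
  moreover have "solvable (G\<lparr>carrier := ?c ` generate G {x, s}\<rparr>)"
    using solvable_conj[OF g generate_is_subgroup sol] x sc by simp
  ultimately show "z \<in> solvabilizer G (inv g \<otimes> x \<otimes> g)"
    unfolding solvabilizer_def using s sc g by auto
qed

lemma set_conj_mono: "A \<subseteq> B \<Longrightarrow> set_conj G A g \<subseteq> set_conj G B g"
  unfolding set_conj_def by blast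

lemma sol_conj:
  assumes x: "x \<in> carrier G" and g: "g \<in> carrier G"
  shows "solvabilizer G (inv g \<otimes> x \<otimes> g) = set_conj G (solvabilizer G x) g"
proof
  show "set_conj G (solvabilizer G x) g \<subseteq> solvabilizer G (inv g \<otimes> x \<otimes> g)"
    using sol_conj_sub[OF x g] .
  have xe: "inv (inv g) \<otimes> (inv g \<otimes> x \<otimes> g) \<otimes> inv g = x"
    using x g by (simp add: m_assoc) (simp add: m_assoc[symmetric])
  have "set_conj G (solvabilizer G (inv g \<otimes> x \<otimes> g)) (inv g) \<subseteq> solvabilizer G x"
    using sol_conj_sub[of "inv g \<otimes> x \<otimes> g" "inv g"] x g xe by simp
  then have "set_conj G (set_conj G (solvabilizer G (inv g \<otimes> x \<otimes> g)) (inv g)) g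
      \<subseteq> set_conj G (solvabilizer G x) g" by (rule set_conj_mono)
  then show "solvabilizer G (inv g \<otimes> x \<otimes> g) \<subseteq> set_conj G (solvabilizer G x) g"
    using g by (simp add: set_conj_mult sol_subset set_conj_one)
qed

lemma gen_pow:
  assumes x: "x \<in> carrier G" and y: "y \<in> carrier G" and cop: "coprime (int (ord x)) i"
  shows "generate G {x [^] i, y} = generate G {x, y}"
proof -
  obtain u v where uv: "u * int (ord x) + v * i = 1"
    using bezout_int[of "int (ord x)" i] cop by auto
  have "x = x [^] (1::int)" using x by simp
  also have "\<dots> = x [^] (int (ord x) * u) \<otimes> x [^] (i * v)"
    using uv x by (metis int_pow_mult mult.commute)
  also have "x [^] (int (ord x) * u) = \<one>"
    using x int_pow_eq_id by simp
  finally have xe: "x = (x [^] i) [^] v" using x by (simp add: int_pow_pow)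
  show ?thesis
  proof
    show "generate G {x [^] i, y} \<subseteq> generate G {x, y}"
      apply (rule generate_subgroup_incl)
      using x y generate_is_subgroup[of "{x,y}"]
      by (auto intro: generate.incl subgroup_int_pow_closed)
    have xi: "x [^] i \<in> generate G {x [^] i, y}" by (rule generate.incl) simp
    have "x \<in> generate G {x [^] i, y}"
      using subgroup_int_pow_closed[OF generate_is_subgroup xi, of v] x y xe by simp
    then show "generate G {x, y} \<subseteq> generate G {x [^] i, y}"
      apply (intro generate_subgroup_incl)
      using x y generate_is_subgroup[of "{x [^] i,y}"]
      by (auto intro: generate.incl)
  qed
qed

lemma sol_pow:
  assumes x: "x \<in> carrier G" and cop: "coprime (int (ord x)) i"
  shows "solvabilizer G (x [^] i) = solvabilizer G x"
  unfolding solvabilizer_def using gen_pow[OF x _ cop] by auto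

lemma sol_rational:
  assumes r: "r \<in> carrier G" and y: "y \<in> rational_class G r"
  shows "\<exists>g \<in> carrier G. solvabilizer G y = set_conj G (solvabilizer G r) g"
proof -
  obtain i g where i: "coprime (int (ord r)) i" and g: "g \<in> carrier G"
    and ye: "y = inv g \<otimes> r [^] i \<otimes> g"
    using y unfolding rational_class_def conj_class_def by blast
  have "solvabilizer G y = set_conj G (solvabilizer G (r [^] i)) g"
    using ye sol_conj[of "r [^] i" g] r g by simp
  then show ?thesis using sol_pow[OF r i] g by auto
qed

lemma normalizer_subgroup:
  assumes S: "S \<subseteq> carrier G"
  shows "subgroup (set_normalizer G S) G"
proof (rule subgroupI)
  show "set_normalizer G S \<subseteq> carrier G" unfolding set_normalizer_def by auto
  show "set_normalizer G S \<noteq> {}" using S set_conj_one unfolding set_normalizer_def by auto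
  fix a assume a: "a \<in> set_normalizer G S"
  then show "inv a \<in> set_normalizer G S"
    using S set_conj_inv[OF S] unfolding set_normalizer_def by (metis (mono_tags, lifting) mem_Collect_eq inv_closed)
  fix b assume b: "b \<in> set_normalizer G S"
  then show "a \<otimes> b \<in> set_normalizer G S"
    using a S set_conj_mult[OF S, of a b] unfolding set_normalizer_def by auto
qed

lemma orbit_card:
  assumes S: "S \<subseteq> carrier G"
  shows "card ((\<lambda>g. set_conj G S g) ` carrier G) = index G (set_normalizer G S)"
proof -
  let ?N = "set_normalizer G S"
  have N: "subgroup ?N G" using normalizer_subgroup[OF S] .
  have rc: "rcosets ?N = (\<lambda>h. ?N #> h) ` carrier G" unfolding RCOSETS_def by auto
  have eq1: "(?N #> h = ?N #> k) \<longleftrightarrow> h \<otimes> inv k \<in> ?N" if h: "h \<in> carrier G" and k: "k \<in> carrier G" for h k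
  proof
    assume "?N #> h = ?N #> k"
    then have "h \<in> ?N #> k" using rcos_self[OF h N] by simp
    then show "h \<otimes> inv k \<in> ?N" using subgroup.rcos_module[OF N is_group k h] by simp
  next
    assume "h \<otimes> inv k \<in> ?N"
    then have "h \<in> ?N #> k" using subgroup.rcos_module[OF N is_group k h] by simp
    then show "?N #> h = ?N #> k" using repr_independence[OF _ k N] by simp
  qed
  have eq2: "(set_conj G S h = set_conj G S k) \<longleftrightarrow> h \<otimes> inv k \<in> ?N" if h: "h \<in> carrier G" and k: "k \<in> carrier G" for h k
  proof
    assume e: "set_conj G S h = set_conj G S k"
    have "set_conj G S (h \<otimes> inv k) = set_conj G (set_conj G S h) (inv k)"
      using S h k by (simp add: set_conj_mult)
    also have "\<dots> = S" using e set_conj_inv[OF S k] by simp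
    finally show "h \<otimes> inv k \<in> ?N" using h k unfolding set_normalizer_def by auto
  next
    assume "h \<otimes> inv k \<in> ?N"
    then have e: "set_conj G S (h \<otimes> inv k) = S" unfolding set_normalizer_def by auto
    have "set_conj G S h = set_conj G S (h \<otimes> inv k \<otimes> k)" using h k by (simp add: m_assoc)
    also have "\<dots> = set_conj G (set_conj G S (h \<otimes> inv k)) k"
      using S h k by (simp add: set_conj_mult)
    finally show "set_conj G S h = set_conj G S k" using e by simp
  qed
  have "card ((\<lambda>g. set_conj G S g) ` carrier G) = card ((\<lambda>h. ?N #> h) ` carrier G)"
    by (rule card_image_eqrel) (simp add: eq1 eq2)
  then show ?thesis unfolding index_def rc .
qed

end

theorem theorem6p1:
  fixes G :: "('a, 'b) monoid_scheme" and R \<chi> :: "'a set"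
  assumes "group G"
    and "finite (carrier G)"
    and "rational_class_reps G R"
    and "\<chi> \<subseteq> R"
    and "sol_nonconj G \<chi>"
    and "\<forall>C. C \<subseteq> R \<and> sol_nonconj G C \<longrightarrow> card C \<le> card \<chi>"
  shows "card (Solv G) = (\<Sum>x \<in> \<chi>. index G (set_normalizer G (solvabilizer G x)))"
proof -
  interpret group G by fact
  have RG: "R \<subseteq> carrier G" using assms(3) unfolding rational_class_reps_def by auto
  have finR: "finite R" using RG assms(2) finite_subset by blast
  have fin\<chi>: "finite \<chi>" using assms(4) finR finite_subset by blast
  have \<chi>G: "\<chi> \<subseteq> carrier G" using assms(4) RG by auto
  define orb where "orb x = (\<lambda>g. set_conj G (solvabilizer G x) g) ` carrier G" for x
  have cov: "\<exists>x \<in> \<chi>. \<exists>g \<in> carrier G. solvabilizer G r = set_conj G (solvabilizer G x) g"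
    if r: "r \<in> R" for r
  proof (rule ccontr)
    assume no: "\<not> ?thesis"
    have rn: "r \<notin> \<chi>"
    proof
      assume "r \<in> \<chi>"
      then show False using no set_conj_one[OF sol_subset] by blast
    qed
    have "sol_nonconj G (insert r \<chi>)"
      unfolding sol_nonconj_def
    proof (intro ballI impI)
      fix a b g assume a: "a \<in> insert r \<chi>" and b: "b \<in> insert r \<chi>" and ab: "a \<noteq> b"
        and g: "g \<in> carrier G"
      show "solvabilizer G a \<noteq> set_conj G (solvabilizer G b) g"
      proof (cases "a = r")
        case True
        then have "b \<in> \<chi>" using b ab by auto
        then show ?thesis using no True g by blast
      next
        case False
        then have a\<chi>: "a \<in> \<chi>" using a by auto
        show ?thesis
        proof (cases "b = r")
          case True
          show ?thesis
          proof
            assume e: "solvabilizer G a = set_conj G (solvabilizer G b) g"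
            have "solvabilizer G r = set_conj G (solvabilizer G a) (inv\<^bsub>G\<^esub> g)"
              using e True set_conj_inv[OF sol_subset g] by simp
            then show False using no a\<chi> g by blast
          qed
        next
          case False
          then have "b \<in> \<chi>" using b by auto
          then show ?thesis using assms(5) a\<chi> ab g unfolding sol_nonconj_def by blast
        qed
      qed
    qed
    moreover have "insert r \<chi> \<subseteq> R" using r assms(4) by auto
    ultimately have "card (insert r \<chi>) \<le> card \<chi>" using assms(6) by blast
    then show False using rn fin\<chi> by simp
  qed
  have Seq: "Solv G = (\<Union>x \<in> \<chi>. orb x)"
  proof
    show "Solv G \<subseteq> (\<Union>x \<in> \<chi>. orb x)"
    proof
      fix S assume "S \<in> Solv G"
      then obtain y where y: "y \<in> carrier G" and S: "S = solvabilizer G y"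
        unfolding Solv_def by auto
      obtain r where r: "r \<in> R" "y \<in> rational_class G r"
        using assms(3) y unfolding rational_class_reps_def by blast
      obtain g0 where g0: "g0 \<in> carrier G" "solvabilizer G y = set_conj G (solvabilizer G r) g0"
        using sol_rational[OF _ r(2)] r(1) RG by blast
      obtain x g where x: "x \<in> \<chi>" and g: "g \<in> carrier G"
        and e: "solvabilizer G r = set_conj G (solvabilizer G x) g"
        using cov[OF r(1)] by blast
      have "S = set_conj G (solvabilizer G x) (g \<otimes>\<^bsub>G\<^esub> g0)"
        using S g0 e g by (simp add: set_conj_mult sol_subset)
      then show "S \<in> (\<Union>x \<in> \<chi>. orb x)" using x g g0 unfolding orb_def by auto
    qed
    show "(\<Union>x \<in> \<chi>. orb x) \<subseteq> Solv G"
    proof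
      fix S assume "S \<in> (\<Union>x \<in> \<chi>. orb x)"
      then obtain x g where x: "x \<in> \<chi>" and g: "g \<in> carrier G"
        and S: "S = set_conj G (solvabilizer G x) g" unfolding orb_def by auto
      have "S = solvabilizer G (inv\<^bsub>G\<^esub> g \<otimes>\<^bsub>G\<^esub> x \<otimes>\<^bsub>G\<^esub> g)" using S sol_conj[of x g] x g \<chi>G by auto
      then show "S \<in> Solv G" unfolding Solv_def using x g \<chi>G by auto
    qed
  qed
  have disj: "orb x \<inter> orb x' = {}" if x: "x \<in> \<chi>" and x': "x' \<in> \<chi>" and xx: "x \<noteq> x'" for x x'
  proof (rule ccontr)
    assume "orb x \<inter> orb x' \<noteq> {}"
    then obtain g h where g: "g \<in> carrier G" and h: "h \<in> carrier G"
      and e: "set_conj G (solvabilizer G x) g = set_conj G (solvabilizer G x') h"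
      unfolding orb_def by auto
    have "solvabilizer G x = set_conj G (set_conj G (solvabilizer G x) g) (inv\<^bsub>G\<^esub> g)"
      using set_conj_inv[OF sol_subset g] by simp
    also have "\<dots> = set_conj G (solvabilizer G x') (h \<otimes>\<^bsub>G\<^esub> inv\<^bsub>G\<^esub> g)"
      using e g h by (simp add: set_conj_mult sol_subset)
    finally show False using assms(5) x x' xx g h unfolding sol_nonconj_def by blast
  qed
  have "card (Solv G) = (\<Sum>x \<in> \<chi>. card (orb x))"
    unfolding Seq
    apply (rule card_UN_disjoint[OF fin\<chi>])
     apply (simp add: orb_def assms(2))
    using disj by blast
  also have "\<dots> = (\<Sum>x \<in> \<chi>. index G (set_normalizer G (solvabilizer G x)))"
    by (rule sum.cong) (auto simp: orb_def orbit_card sol_subset)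
  finally show ?thesis .
qed

end
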